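(* Let $\Omega\subset\mathbb{R}^2$ be a bounded planar domain admitting $p$-frames ($p\ge1$ an integer), and let $T$ be an invertible real $2\times2$ matrix. Then $$\frac{A(T(\Omega))^{1+p}}{I_{2p}(T(\Omega))}=\frac{A(T^{-1}(\Omega))^{1+p}}{I_{2p}(T^{-1}(\Omega))}.$$
   Context: $G_\Omega=\{U\in O(2):U(\Omega)=\Omega\}$; $\Omega$ admits $p$-frames if every $G_\Omega$-invariant homogeneous polynomial of degree $2p$ on $\mathbb{R}^2$ is a scalar multiple of $|x|^{2p}$. $A(D)$ is area and $I_{2p}(D)=\int_D|x|^{2p}dx$. *)

theory Defs
  imports "HOL-Analysis.Analysis"
begin

definition sym_group :: "(real^2) set \<Rightarrow> (real^2^2) set" where
  "sym_group \<Omega> = {U. orthogonal_matrix U \<and> (\<lambda>x. U *v x) ` \<Omega> = \<Omega>}"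

definition homog_poly :: "nat \<Rightarrow> (real^2 \<Rightarrow> real) \<Rightarrow> bool" where
  "homog_poly d f \<longleftrightarrow> (\<exists>c :: nat \<Rightarrow> real.
      \<forall>x. f x = (\<Sum>k\<le>d. c k * (x$1) ^ k * (x$2) ^ (d - k)))"

definition admits_p_frames :: "nat \<Rightarrow> (real^2) set \<Rightarrow> bool" where
  "admits_p_frames p \<Omega> \<longleftrightarrow>
     (\<forall>f. homog_poly (2*p) f \<and> (\<forall>U\<in>sym_group \<Omega>. \<forall>x. f (U *v x) = f x)
          \<longrightarrow> (\<exists>a::real. \<forall>x. f x = a * norm x ^ (2*p)))"

definition area :: "(real^2) set \<Rightarrow> real" where
  "area D = measure lebesgue D"

definition I_moment :: "nat \<Rightarrow> (real^2) set \<Rightarrow> real" where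
  "I_moment q D = integral D (\<lambda>x. norm x ^ q)"

end

theory Submission
  imports Defs
begin


lemma aint_cont:
  fixes h :: "real^2 \<Rightarrow> real"
  assumes "continuous_on UNIV h" "bounded S" "S \<in> sets lebesgue"
  shows "h absolutely_integrable_on S"
proof -
  obtain a b where "S \<subseteq> cbox a b" using assms(2) bounded_subset_cbox_symmetric by metis
  moreover have "h absolutely_integrable_on cbox a b"
    using absolutely_integrable_continuous assms(1) continuous_on_subset by blast
  ultimately show ?thesis using assms(3) set_integrable_subset by blast
qed

lemma cov:
  fixes h :: "real^2 \<Rightarrow> real" and g :: "real^2 \<Rightarrow> real^2"
  assumes "linear g" "(h \<circ> g) absolutely_integrable_on S"
  shows "integral (g ` S) h = \<bar>det (matrix g)\<bar> * integral S (h \<circ> g)"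
proof -
  let ?f = "\<lambda>x. (vec (h x) :: real^1)"
  have ai: "(?f \<circ> g) absolutely_integrable_on S"
  proof -
    have "(\<lambda>x. (h \<circ> g) x *\<^sub>R (vec 1 :: real^1)) absolutely_integrable_on S"
      using absolutely_integrable_scaleR_right[OF assms(2)] .
    moreover have "(\<lambda>x. (h \<circ> g) x *\<^sub>R (vec 1 :: real^1)) = ?f \<circ> g"
      by (auto simp: vec_eq_iff)
    ultimately show ?thesis by simp
  qed
  have e: "integral (g ` S) ?f = \<bar>det (matrix g)\<bar> *\<^sub>R integral S (?f \<circ> g)"
    using integral_change_of_variables_linear[OF assms(1)] ai by blast
  have ai2: "?f absolutely_integrable_on (g ` S)"
    using absolutely_integrable_on_linear_image[OF assms(1)] ai
    by (metis absolutely_integrable_change_of_variables_linear assms(1) absolutely_integrable_on_scaleR_iff)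
  have i1: "integral (g ` S) h = integral (g ` S) ?f $ 1"
    using integral_component_eq_cart[of ?f "g ` S" 1] ai2 absolutely_integrable_on_def by auto
  have i2: "integral S (h \<circ> g) = integral S (?f \<circ> g) $ 1"
    using integral_component_eq_cart[of "?f \<circ> g" S 1] ai absolutely_integrable_on_def by (auto simp: o_def)
  show ?thesis using e i1 i2 by simp
qed



definition HP :: "nat \<Rightarrow> (real^2 \<Rightarrow> real^2 \<Rightarrow> real) \<Rightarrow> bool" where
  "HP d G \<longleftrightarrow> (\<exists>c::nat \<Rightarrow> real^2 \<Rightarrow> real. (\<forall>k. continuous_on UNIV (c k)) \<and>
      (\<forall>x z. G x z = (\<Sum>k\<le>d. c k x * (z$1)^k * (z$2)^(d-k))))"

lemma HP_const: "continuous_on UNIV a \<Longrightarrow> HP 0 (\<lambda>x z. a x)"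
  unfolding HP_def by (rule exI[of _ "\<lambda>k. a"]) auto

lemma HP_mult1: assumes "HP d G" shows "HP (Suc d) (\<lambda>x z. z$1 * G x z)"
proof -
  obtain c where c: "\<forall>k. continuous_on UNIV (c k)" "\<forall>x z. G x z = (\<Sum>k\<le>d. c k x * (z$1)^k * (z$2)^(d-k))"
    using assms unfolding HP_def by blast
  define c' where "c' k = (if k = 0 then (\<lambda>x. 0) else c (k-1))" for k
  have "continuous_on UNIV (c' k)" for k using c(1) by (cases k) (auto simp: c'_def)
  moreover have "z$1 * G x z = (\<Sum>k\<le>Suc d. c' k x * (z$1)^k * (z$2)^(Suc d-k))" for x z
    unfolding c(2)[rule_format] sum.atMost_Suc_shift by (simp add: c'_def sum_distrib_left algebra_simps)
  ultimately show ?thesis unfolding HP_def by blast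
qed

lemma HP_mult2: assumes "HP d G" shows "HP (Suc d) (\<lambda>x z. z$2 * G x z)"
proof -
  obtain c where c: "\<forall>k. continuous_on UNIV (c k)" "\<forall>x z. G x z = (\<Sum>k\<le>d. c k x * (z$1)^k * (z$2)^(d-k))"
    using assms unfolding HP_def by blast
  define c' where "c' k = (if k \<le> d then c k else (\<lambda>x. 0))" for k
  have "continuous_on UNIV (c' k)" for k using c(1) by (auto simp: c'_def)
  moreover have "z$2 * G x z = (\<Sum>k\<le>Suc d. c' k x * (z$1)^k * (z$2)^(Suc d-k))" for x z
  proof -
    have "(\<Sum>k\<le>Suc d. c' k x * (z$1)^k * (z$2)^(Suc d-k)) = (\<Sum>k\<le>d. c k x * (z$1)^k * (z$2)^(Suc d-k))"
      by (simp add: c'_def)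
    also have "\<dots> = (\<Sum>k\<le>d. z$2 * (c k x * (z$1)^k * (z$2)^(d-k)))"
      by (rule sum.cong) (auto simp: Suc_diff_le)
    finally show ?thesis unfolding c(2)[rule_format] by (simp add: sum_distrib_left)
  qed
  ultimately show ?thesis unfolding HP_def by blast
qed

lemma HP_add: assumes "HP d G" "HP d H" shows "HP d (\<lambda>x z. G x z + H x z)"
proof -
  obtain c where c: "\<forall>k. continuous_on UNIV (c k)" "\<forall>x z. G x z = (\<Sum>k\<le>d. c k x * (z$1)^k * (z$2)^(d-k))"
    using assms unfolding HP_def by blast
  obtain b where b: "\<forall>k. continuous_on UNIV (b k)" "\<forall>x z. H x z = (\<Sum>k\<le>d. b k x * (z$1)^k * (z$2)^(d-k))"
    using assms unfolding HP_def by blast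
  have "continuous_on UNIV (\<lambda>x. c k x + b k x)" for k using b(1) c(1) by (intro continuous_intros) auto
  moreover have "G x z + H x z = (\<Sum>k\<le>d. (c k x + b k x) * (z$1)^k * (z$2)^(d-k))" for x z
    unfolding b(2)[rule_format] c(2)[rule_format] by (simp add: sum.distrib[symmetric] algebra_simps)
  ultimately show ?thesis unfolding HP_def by (intro exI[of _ "\<lambda>k x. c k x + b k x"]) blast
qed

lemma HP_scale: assumes "continuous_on UNIV a" "HP d G" shows "HP d (\<lambda>x z. a x * G x z)"
proof -
  obtain c where c: "\<forall>k. continuous_on UNIV (c k)" "\<forall>x z. G x z = (\<Sum>k\<le>d. c k x * (z$1)^k * (z$2)^(d-k))"
    using assms unfolding HP_def by blast
  have "continuous_on UNIV (\<lambda>x. a x * c k x)" for k using assms(1) c(1) by (intro continuous_intros) auto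
  moreover have "a x * G x z = (\<Sum>k\<le>d. (a x * c k x) * (z$1)^k * (z$2)^(d-k))" for x z
    unfolding c(2)[rule_format] by (simp add: sum_distrib_left algebra_simps)
  ultimately show ?thesis unfolding HP_def by (intro exI[of _ "\<lambda>k x. a x * c k x"]) blast
qed

lemma HP_zero: "HP d (\<lambda>x z. 0)"
  unfolding HP_def by (intro exI[of _ "\<lambda>k x. 0"]) auto

lemma HP_sum: assumes "finite I" "\<forall>i\<in>I. HP d (F i)" shows "HP d (\<lambda>x z. \<Sum>i\<in>I. F i x z)"
  using assms
proof (induction I rule: finite_induct)
  case empty then show ?case by (simp add: HP_zero)
next
  case (insert i I) then show ?case by (simp add: HP_add)
qed

lemma HP_mon1: "HP d G \<Longrightarrow> HP (d + k) (\<lambda>x z. G x z * (z$1)^k)"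
proof (induction k)
  case 0 then show ?case by simp
next
  case (Suc k)
  from HP_mult1[OF Suc.IH[OF Suc.prems]] show ?case by (simp add: algebra_simps)
qed

lemma HP_mon2: "HP d G \<Longrightarrow> HP (d + k) (\<lambda>x z. G x z * (z$2)^k)"
proof (induction k)
  case 0 then show ?case by simp
next
  case (Suc k)
  from HP_mult2[OF Suc.IH[OF Suc.prems]] show ?case by (simp add: algebra_simps)
qed

lemma HP_mult: assumes "HP d1 G" "HP d2 H" shows "HP (d1 + d2) (\<lambda>x z. G x z * H x z)"
proof -
  obtain b where b: "\<forall>k. continuous_on UNIV (b k)" "\<forall>x z. H x z = (\<Sum>k\<le>d2. b k x * (z$1)^k * (z$2)^(d2-k))"
    using assms unfolding HP_def by blast
  have "HP (d1 + d2) (\<lambda>x z. b k x * (G x z * (z$1)^k * (z$2)^(d2-k)))" if "k \<le> d2" for k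
  proof -
    have "HP (d1 + k + (d2 - k)) (\<lambda>x z. G x z * (z$1)^k * (z$2)^(d2-k))"
      by (intro HP_mon2 HP_mon1 assms)
    then show ?thesis using that b(1) HP_scale by simp
  qed
  then have "HP (d1 + d2) (\<lambda>x z. \<Sum>k\<le>d2. b k x * (G x z * (z$1)^k * (z$2)^(d2-k)))"
    by (intro HP_sum) auto
  moreover have "(\<lambda>x z. G x z * H x z) = (\<lambda>x z. \<Sum>k\<le>d2. b k x * (G x z * (z$1)^k * (z$2)^(d2-k)))"
    unfolding b(2)[rule_format] by (auto simp: sum_distrib_left algebra_simps)
  ultimately show ?thesis by simp
qed

lemma HP_pow: assumes "HP d G" shows "HP (n * d) (\<lambda>x z. G x z ^ n)"
proof (induction n)
  case 0 then show ?case using HP_const[of "\<lambda>x. 1"] by simp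
next
  case (Suc n)
  from HP_mult[OF assms Suc.IH] show ?case by (simp add: algebra_simps)
qed

lemma HP_integral:
  assumes "HP d G" "bounded S" "S \<in> sets lebesgue"
  shows "homog_poly d (\<lambda>z. integral S (\<lambda>x. G x z))"
proof -
  obtain c where c: "\<forall>k. continuous_on UNIV (c k)" "\<forall>x z. G x z = (\<Sum>k\<le>d. c k x * (z$1)^k * (z$2)^(d-k))"
    using assms unfolding HP_def by blast
  have int: "(c k) integrable_on S" for k
    using aint_cont[OF c(1)[rule_format] assms(2,3)] set_lebesgue_integral_eq_integral(1) by blast
  have "integral S (\<lambda>x. G x z) = (\<Sum>k\<le>d. integral S (c k) * (z$1)^k * (z$2)^(d-k))" for z
  proof -
    have "integral S (\<lambda>x. G x z) = (\<Sum>k\<le>d. integral S (\<lambda>x. c k x * ((z$1)^k * (z$2)^(d-k))))"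
      unfolding c(2)[rule_format] by (subst integral_sum) (auto simp: int mult.assoc intro: integrable_on_mult_left)
    also have "\<dots> = (\<Sum>k\<le>d. integral S (c k) * (z$1)^k * (z$2)^(d-k))"
      by (simp add: mult.assoc)
    finally show ?thesis .
  qed
  then show ?thesis unfolding homog_poly_def by (intro exI[of _ "\<lambda>k. integral S (c k)"]) blast
qed



definition F :: "real \<Rightarrow> real \<Rightarrow> real^2 \<Rightarrow> real^2 \<Rightarrow> real" where
  "F l1 l2 z x = l1*(z$1*x$1+z$2*x$2)^2 + l2*(z$1*x$2-z$2*x$1)^2"

lemma norm2: "norm (x::real^2) = sqrt (x$1^2 + x$2^2)"
  by (simp add: norm_eq_sqrt_inner inner_vec_def sum_2 power2_eq_square)

lemma sum_le2: "(\<Sum>k\<le>(2::nat). f k) = f 0 + f 1 + (f 2 :: real)"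
  by (simp add: numeral_2_eq_2)

lemma HP_F: "HP 2 (\<lambda>x z. F l1 l2 z x)"
proof -
  define c where "c (k::nat) = (if k = 0 then (\<lambda>x::real^2. l1*x$2^2 + l2*x$1^2) else if k = 1 then (\<lambda>x. 2*l1*x$1*x$2 - 2*l2*x$1*x$2)
     else (\<lambda>x. l1*x$1^2 + l2*x$2^2))" for k
  have "continuous_on UNIV (c k)" for k
    unfolding c_def by (auto intro!: continuous_intros)
  moreover have "F l1 l2 z x = (\<Sum>k\<le>2. c k x * (z$1)^k * (z$2)^(2-k))" for x z
    unfolding sum_le2 by (simp add: c_def F_def power2_eq_square algebra_simps)
  ultimately show ?thesis unfolding HP_def by blast
qed

lemma F_orth:
  assumes "orthogonal_matrix U"
  shows "F l1 l2 (U *v z) (U *v y) = F l1 l2 z y"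
proof -
  have tt: "transpose U ** U = mat 1" using assms orthogonal_matrix_def by blast
  have e: "(\<Sum>k\<in>UNIV. U$k$i * U$k$j) = (if i = j then 1 else 0)" for i j
    using arg_cong[OF tt, of "\<lambda>M. M$i$j"]
    by (simp add: matrix_matrix_mult_def mat_def transpose_def)
  have e11: "U$1$1*U$1$1 + U$2$1*U$2$1 = 1" using e[of 1 1] by (simp add: sum_2)
  have e22: "U$1$2*U$1$2 + U$2$2*U$2$2 = 1" using e[of 2 2] by (simp add: sum_2)
  have e12: "U$1$1*U$1$2 + U$2$1*U$2$2 = 0" using e[of 1 2] by (simp add: sum_2)
  have d: "(U$1$1 * U$2$2 - U$1$2 * U$2$1)^2 = 1"
    using det_orthogonal_matrix[OF assms] by (auto simp: det_2)
  have h1: "(U *v z)$1*(U *v y)$1 + (U *v z)$2*(U *v y)$2 =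
     z$1*y$1*(U$1$1*U$1$1 + U$2$1*U$2$1) + (z$1*y$2+z$2*y$1)*(U$1$1*U$1$2 + U$2$1*U$2$2)
     + z$2*y$2*(U$1$2*U$1$2 + U$2$2*U$2$2)"
    by (simp add: matrix_vector_mult_def sum_2 algebra_simps)
  have h2: "(U *v z)$1*(U *v y)$2 - (U *v z)$2*(U *v y)$1 =
     (U$1$1 * U$2$2 - U$1$2 * U$2$1) * (z$1*y$2 - z$2*y$1)"
    by (simp add: matrix_vector_mult_def sum_2 algebra_simps)
  have h1': "(U *v z)$1*(U *v y)$1 + (U *v z)$2*(U *v y)$2 = z$1*y$1 + z$2*y$2"
    unfolding h1 e11 e22 e12 by simp
  have h2': "((U *v z)$1*(U *v y)$2 - (U *v z)$2*(U *v y)$1)^2 = (z$1*y$2 - z$2*y$1)^2"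
    unfolding h2 power_mult_distrib d by simp
  show ?thesis
    unfolding F_def h1' h2' ..
qed

lemma frames_inv:
  assumes fr: "admits_p_frames p \<Omega>" and bd: "bounded \<Omega>" and ms: "\<Omega> \<in> sets lebesgue"
    and nv: "norm v = 1" and nw: "norm w = 1"
  shows "integral \<Omega> (\<lambda>x. F l1 l2 v x ^ p) = integral \<Omega> (\<lambda>x. F l1 l2 w x ^ p)"
proof -
  define f where "f z = integral \<Omega> (\<lambda>x. F l1 l2 z x ^ p)" for z
  have cont: "continuous_on UNIV (\<lambda>y. F l1 l2 z y ^ p)" for z
    unfolding F_def by (intro continuous_intros)
  have hp: "homog_poly (2*p) f"
    using HP_integral[OF HP_pow[OF HP_F, of p] bd ms] unfolding f_def by (simp add: mult.commute)
  have inv: "f (U *v z) = f z" if U: "U \<in> sym_group \<Omega>" for U z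
  proof -
    have oU: "orthogonal_matrix U" and im: "(\<lambda>x. U *v x) ` \<Omega> = \<Omega>" using U by (auto simp: sym_group_def)
    have tt: "transpose U ** U = mat 1" and tt2: "U ** transpose U = mat 1"
      using oU orthogonal_matrix_def by blast+
    define g where "g x = transpose U *v x" for x
    have lin: "linear g" unfolding g_def by (rule matrix_vector_mul_linear)
    have gim: "g ` \<Omega> = \<Omega>"
    proof -
      have "g ` \<Omega> = g ` ((\<lambda>x. U *v x) ` \<Omega>)" using im by simp
      also have "\<dots> = \<Omega>"
      proof -
        have "g (U *v x) = x" for x unfolding g_def by (metis matrix_vector_mul_assoc tt matrix_vector_mul_lid)
        then show ?thesis by (simp add: image_image)
      qed
      finally show ?thesis .
    qed
    have pt: "F l1 l2 (U *v z) x = F l1 l2 z (g x)" for x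
    proof -
      have "x = U *v g x" unfolding g_def by (metis matrix_vector_mul_assoc tt2 matrix_vector_mul_lid)
      then have "F l1 l2 (U *v z) x = F l1 l2 (U *v z) (U *v g x)" by simp
      also have "\<dots> = F l1 l2 z (g x)" using F_orth[OF oU] .
      finally show ?thesis .
    qed
    have dg: "\<bar>det (matrix g)\<bar> = 1"
    proof -
      have "matrix g = transpose U" unfolding g_def by (rule matrix_of_matrix_vector_mul)
      then show ?thesis using det_orthogonal_matrix[OF oU] by (auto simp: det_transpose)
    qed
    have ai: "((\<lambda>y. F l1 l2 z y ^ p) \<circ> g) absolutely_integrable_on \<Omega>"
      using aint_cont[OF _ bd ms] cont lin
      by (metis continuous_on_compose linear_continuous_on linear_conv_bounded_linear top_greatest continuous_on_subset image_subset_iff_subset_vimage)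
    have "f (U *v z) = integral \<Omega> ((\<lambda>y. F l1 l2 z y ^ p) \<circ> g)"
      unfolding f_def pt by (simp add: o_def)
    also have "\<dots> = integral (g ` \<Omega>) (\<lambda>y. F l1 l2 z y ^ p)"
      using cov[OF lin ai] dg by simp
    also have "\<dots> = f z" unfolding gim f_def ..
    finally show ?thesis .
  qed
  obtain a where a: "\<forall>x. f x = a * norm x ^ (2*p)"
    using fr hp inv unfolding admits_p_frames_def by blast
  show ?thesis using a nv nw unfolding f_def by simp
qed

definition Qf :: "real \<Rightarrow> real \<Rightarrow> real \<Rightarrow> real^2 \<Rightarrow> real" where
  "Qf a b c x = a*x$1^2 + 2*b*x$1*x$2 + c*x$2^2"

lemma diag: "\<exists>v. norm v = 1 \<and> (\<forall>x. Qf a b c x = F ((a+c+sqrt ((a-c)^2 + 4*b^2))/2) ((a+c-sqrt ((a-c)^2 + 4*b^2))/2) v x)"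
proof -
  define r where "r = sqrt ((a-c)^2 + 4*b^2)"
  have "\<exists>v. norm v = 1 \<and> (\<forall>x. Qf a b c x = F ((a+c+r)/2) ((a+c-r)/2) v x)"
  proof (cases "r = 0")
    case True
    then have s: "(a-c)^2 + 4*b^2 = 0" unfolding r_def by simp
    have "b^2 = 0" "(a-c)^2 = 0" using s zero_le_power2[of "a-c"] zero_le_power2[of b] by linarith+
    then have "b = 0" "a = c" by simp_all
    then show ?thesis using True
      by (intro exI[of _ "vector [1,0]"])
         (auto simp: norm2 Qf_def F_def)
  next
    case False
    have "r \<ge> 0" unfolding r_def by simp
    with False have rp: "r > 0" by linarith
    have "((a-c)/r)^2 + (2*b/r)^2 = 1"
    proof -
      have r2: "r^2 = (a-c)^2 + 4*b^2" unfolding r_def by simp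
      have "((a-c)/r)^2 + (2*b/r)^2 = ((a-c)^2 + 4*b^2) / r^2"
        by (simp add: power_divide add_divide_distrib power_mult_distrib)
      moreover have "r^2 > 0" using rp by simp
      ultimately show ?thesis using r2 by simp
    qed
    then obtain t where t: "cos t = (a-c)/r" "sin t = 2*b/r" using sincos_total_2pi by metis
    define co sn where "co = cos (t/2)" "sn = sin (t/2)"
    have c2: "co^2 - sn^2 = (a-c)/r" using t(1) cos_double[of "t/2"] co_sn_def by simp
    have s2: "2*co * sn = 2*b/r" using t(2) sin_double[of "t/2"] co_sn_def by simp
    have n1: "co^2 + sn^2 = 1" unfolding co_sn_def by simp
    have c2': "r*(co^2 - sn^2) = a - c" using c2 rp by (simp add: field_simps)
    have s2': "r*co * sn = b" using s2 rp by (simp add: field_simps)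
    have nv: "norm (vector [co, sn] :: real^2) = 1" using n1 by (simp add: norm2)
    have eq: "Qf a b c x = F ((a+c+r)/2) ((a+c-r)/2) (vector [co, sn]) x" for x :: "real^2"
    proof -
      have "F ((a+c+r)/2) ((a+c-r)/2) (vector [co, sn]) x =
        (a+c)/2*(co^2+sn^2)*(x$1^2+x$2^2) + (r*(co^2-sn^2))/2*(x$1^2-x$2^2) + 2*(r*co * sn)*x$1*x$2"
        unfolding F_def by (simp add: field_simps power2_eq_square)
      also have "\<dots> = Qf a b c x" unfolding c2' s2' n1 Qf_def by (simp add: field_simps power2_eq_square)
      finally show ?thesis by simp
    qed
    show ?thesis using nv eq by blast
  qed
  then show ?thesis unfolding r_def .
qed

lemma spec_inv:
  assumes fr: "admits_p_frames p \<Omega>" and bd: "bounded \<Omega>" and ms: "\<Omega> \<in> sets lebesgue"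
    and tr: "a + c = a' + c'" and dt: "a*c - b^2 = a'*c' - b'^2"
  shows "integral \<Omega> (\<lambda>x. Qf a b c x ^ p) = integral \<Omega> (\<lambda>x. Qf a' b' c' x ^ p)"
proof -
  have "(a-c)^2 + 4*b^2 = (a+c)^2 - 4*(a*c - b^2)" by (simp add: power2_eq_square algebra_simps)
  also have "\<dots> = (a'+c')^2 - 4*(a'*c' - b'^2)" using tr dt by simp
  also have "\<dots> = (a'-c')^2 + 4*b'^2" by (simp add: power2_eq_square algebra_simps)
  finally have rr: "(a-c)^2 + 4*b^2 = (a'-c')^2 + 4*b'^2" .
  obtain v where v: "norm v = 1" "\<forall>x. Qf a b c x = F ((a+c+sqrt ((a-c)^2 + 4*b^2))/2) ((a+c-sqrt ((a-c)^2 + 4*b^2))/2) v x"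
    using diag by blast
  obtain w where w: "norm w = 1" "\<forall>x. Qf a' b' c' x = F ((a'+c'+sqrt ((a'-c')^2 + 4*b'^2))/2) ((a'+c'-sqrt ((a'-c')^2 + 4*b'^2))/2) w x"
    using diag by blast
  show ?thesis
    using frames_inv[OF fr bd ms v(1) w(1)] v(2) w(2) unfolding rr tr by simp
qed



lemma cont_normT: "continuous_on UNIV (\<lambda>x. norm ((M::real^2^2) *v x) ^ n)"
  by (intro continuous_intros linear_continuous_on matrix_vector_mul_bounded_linear)

lemma normT_Qf: "norm ((T::real^2^2) *v x) ^ (2*p) =
  Qf (T$1$1^2 + T$2$1^2) (T$1$1*T$1$2 + T$2$1*T$2$2) (T$1$2^2 + T$2$2^2) x ^ p"
proof -
  have "norm (T *v x) ^ 2 = (T *v x)$1^2 + (T *v x)$2^2" by (simp add: norm2)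
  also have "\<dots> = Qf (T$1$1^2 + T$2$1^2) (T$1$1*T$1$2 + T$2$1*T$2$2) (T$1$2^2 + T$2$2^2) x"
    by (simp add: Qf_def matrix_vector_mult_def sum_2 power2_eq_square algebra_simps)
  finally show ?thesis by (simp add: power_mult)
qed

lemma inv_Qf:
  assumes "T ** Ti = mat 1"
  shows "norm ((Ti::real^2^2) *v x) ^ (2*p) * (det T ^ 2) ^ p =
    Qf (T$2$1^2 + T$2$2^2) (-(T$1$1*T$2$1 + T$1$2*T$2$2)) (T$1$1^2 + T$1$2^2) x ^ p"
proof -
  define y where "y = Ti *v x"
  have x: "x = T *v y" unfolding y_def by (metis matrix_vector_mul_assoc assms matrix_vector_mul_lid)
  have "norm y ^ 2 * det T ^ 2 = (y$1^2 + y$2^2) * det T ^ 2" by (simp add: norm2)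
  also have "\<dots> = Qf (T$2$1^2 + T$2$2^2) (-(T$1$1*T$2$1 + T$1$2*T$2$2)) (T$1$1^2 + T$1$2^2) (T *v y)"
    by (simp add: Qf_def det_2 matrix_vector_mult_def sum_2 power2_eq_square algebra_simps)
  finally have "norm y ^ 2 * det T ^ 2 = Qf (T$2$1^2 + T$2$2^2) (-(T$1$1*T$2$1 + T$1$2*T$2$2)) (T$1$1^2 + T$1$2^2) x"
    using x by simp
  then have "(norm y ^ 2 * det T ^ 2) ^ p = Qf (T$2$1^2 + T$2$2^2) (-(T$1$1*T$2$1 + T$1$2*T$2$2)) (T$1$1^2 + T$1$2^2) x ^ p"
    by simp
  then show ?thesis unfolding y_def by (simp add: power_mult power_mult_distrib)
qed

theorem lemma6p3:
  fixes \<Omega> :: "(real^2) set" and T :: "real^2^2" and p :: nat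
  assumes "open \<Omega>" and "connected \<Omega>" and "\<Omega> \<noteq> {}" and "bounded \<Omega>"
    and "p \<ge> 1"
    and "admits_p_frames p \<Omega>"
    and "invertible T"
  shows "area ((\<lambda>x. T *v x) ` \<Omega>) ^ (1 + p) / I_moment (2*p) ((\<lambda>x. T *v x) ` \<Omega>)
       = area ((\<lambda>x. matrix_inv T *v x) ` \<Omega>) ^ (1 + p) / I_moment (2*p) ((\<lambda>x. matrix_inv T *v x) ` \<Omega>)"
proof -
  define Ti where "Ti = matrix_inv T"
  have lm: "\<Omega> \<in> lmeasurable" using lmeasurable_open assms(1,4) by blast
  then have ms: "\<Omega> \<in> sets lebesgue" by (rule fmeasurableD)
  have inv: "T ** Ti = mat 1 \<and> Ti ** T = mat 1"
    using assms(7) unfolding invertible_def Ti_def matrix_inv_def by (rule someI_ex)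
  have dd: "det T * det Ti = 1" using det_mul[of T Ti] inv by (simp add: det_I)
  define d where "d = \<bar>det T\<bar>"
  have dpos: "d > 0" using dd unfolding d_def by (cases "det T = 0") auto
  have "det T \<noteq> 0" using dd by auto
  then have "det Ti = 1 / det T" using dd by (simp add: field_simps mult.commute)
  then have dTi: "\<bar>det Ti\<bar> = 1 / d" unfolding d_def by simp
  define A where "A = measure lebesgue \<Omega>"
  have a1: "area ((\<lambda>x. T *v x) ` \<Omega>) = d * A"
    unfolding area_def A_def d_def using measure_linear_image[OF matrix_vector_mul_linear lm, of T] by simp
  have a2: "area ((\<lambda>x. Ti *v x) ` \<Omega>) = A / d"
    unfolding area_def A_def using measure_linear_image[OF matrix_vector_mul_linear lm, of Ti] dTi by simp
  define K where "K = integral \<Omega> (\<lambda>x. norm (T *v x) ^ (2*p))"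
  have ai: "((\<lambda>y. norm y ^ (2*p)) \<circ> (\<lambda>x. M *v x)) absolutely_integrable_on \<Omega>" for M :: "real^2^2"
    using aint_cont[OF cont_normT assms(4) ms] by (simp add: o_def)
  have i1: "I_moment (2*p) ((\<lambda>x. T *v x) ` \<Omega>) = d * K"
    unfolding I_moment_def K_def d_def using cov[OF matrix_vector_mul_linear ai[of T]] by (simp add: o_def)
  have i2': "I_moment (2*p) ((\<lambda>x. Ti *v x) ` \<Omega>) = (1/d) * integral \<Omega> (\<lambda>x. norm (Ti *v x) ^ (2*p))"
    unfolding I_moment_def using cov[OF matrix_vector_mul_linear ai[of Ti]] dTi by (simp add: o_def)
  define Q1 where "Q1 x = Qf (T$1$1^2 + T$2$1^2) (T$1$1*T$1$2 + T$2$1*T$2$2) (T$1$2^2 + T$2$2^2) x ^ p" for x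
  define Q2 where "Q2 x = Qf (T$2$1^2 + T$2$2^2) (-(T$1$1*T$2$1 + T$1$2*T$2$2)) (T$1$1^2 + T$1$2^2) x ^ p" for x
  have KQ: "K = integral \<Omega> Q1" unfolding K_def Q1_def normT_Qf ..
  have "integral \<Omega> Q2 = integral \<Omega> Q1"
    unfolding Q1_def Q2_def
    by (rule spec_inv[OF assms(6,4) ms]) (simp_all add: power2_eq_square algebra_simps)
  have d2: "(det T ^ 2) ^ p = d ^ (2*p)" unfolding d_def by (simp add: power_mult)
  have "integral \<Omega> (\<lambda>x. norm (Ti *v x) ^ (2*p)) = integral \<Omega> (\<lambda>x. Q2 x / d ^ (2*p))"
  proof -
    have "norm (Ti *v x) ^ (2*p) = Q2 x / d ^ (2*p)" for x
      using inv_Qf[of T Ti x p] inv dpos d2 unfolding Q2_def by (simp add: field_simps)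
    then show ?thesis by simp
  qed
  also have "\<dots> = integral \<Omega> Q2 / d ^ (2*p)" by simp
  finally have i2: "I_moment (2*p) ((\<lambda>x. Ti *v x) ` \<Omega>) = K / d ^ (1 + 2*p)"
    using i2' \<open>integral \<Omega> Q2 = integral \<Omega> Q1\<close> KQ by simp
  have pp: "d ^ (1 + 2*p) = d * (d^p * d^p)" by (simp add: mult_2 power_add)
  have dp: "d ^ p > 0" using dpos by simp
  have fin: "(d * A) ^ (1 + p) / (d * K) = (A / d) ^ (1 + p) / (K / (d * (d ^ p * d ^ p)))"
  proof (cases "K = 0")
    case True then show ?thesis by simp
  next
    case False
    have "(d * A) ^ (1 + p) / (d * K) = d^p * A^(1+p) / K"
      using dpos False by (simp add: power_mult_distrib power_add field_simps)
    moreover have "(A / d) ^ (1 + p) / (K / (d * (d ^ p * d ^ p))) = d^p * A^(1+p) / K"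
      using dpos dp False by (simp add: power_divide power_add field_simps)
    ultimately show ?thesis by (rule trans[OF _ sym])
  qed
  show ?thesis
    unfolding Ti_def[symmetric] a1 a2 i1 i2 pp by (rule fin)
qed

end
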